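(* Let $d,k\ge 1$, let $w_1,\dots,w_k>0$ with $w_{\max}:=\max_i w_i$, and let $a_i,b_i,c_i\in\mathbb{R}^d$ ($i\in[k]$) be unit vectors. Set $T=\sum_{i\in[k]} w_i\, a_i\otimes b_i\otimes c_i$, $A=[a_1\cdots a_k]$, $B=[b_1\cdots b_k]$, $C=[c_1\cdots c_k]\in\mathbb{R}^{d\times k}$. Let $\alpha>0$ and $\alpha_0>0$ be parameters such that: (i) $\max_{i\ne j}\max\{|\langle a_i,a_j\rangle|,|\langle b_i,b_j\rangle|,|\langle c_i,c_j\rangle|\}\le \alpha/\sqrt d$; (ii) $\max\{\|A\|,\|B\|,\|C\|\}\le 1+\alpha_0\sqrt{k/d}$; (iii) $\|T\|\le \alpha_0 w_{\max}$ and, for every $j\in[k]$, $\big\|\sum_{i\ne j} w_i\langle a_i,a_j\rangle\langle b_i,b_j\rangle c_i\big\|\le \alpha\, w_{\max}\sqrt k/d$. Let $\Psi\in\mathbb{R}^{d\times d\times d}$ be any tensor, $\psi:=\|\Psi\|$, and $\hat T=T+\Psi$. Fix $j\in[k]$ and unit vectors $\hat a,\hat b$ with $\mathrm{dist}(\hat a,a_j)\le\epsilon_a$ and $\mathrm{dist}(\hat b,b_j)\le \epsilon_b$; set $\epsilon:=\max\{\epsilon_a,\epsilon_b\}$ and $$f(\epsilon;k,d):=\alpha\frac{\sqrt k}{d}+\frac{2\alpha}{\sqrt d}\Big(1+\alpha_0\sqrt{\tfrac kd}\Big)^2\epsilon+\alpha_0\epsilon^2 .$$ Suppose $w_j-w_j\epsilon^2-w_{\max}f(\epsilon;k,d)-\psi>0$.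 Let $\hat c:=\hat T(\hat a,\hat b,I)/\|\hat T(\hat a,\hat b,I)\|$. Then $$\mathrm{dist}(\hat c,c_j)\le \frac{w_{\max}f(\epsilon;k,d)+\psi}{w_j-w_j\epsilon^2-w_{\max}f(\epsilon;k,d)-\psi}.$$ Moreover, if this bound satisfies $\mathrm{dist}(\hat c,c_j)\le\epsilon$, then $\hat w:=\hat T(\hat a,\hat b,\hat c)$ satisfies $|\hat w-w_j|\le 2w_j\epsilon^2+w_{\max}f(\epsilon;k,d)+\psi$.
   Context: For a third order tensor $T\in\mathbb{R}^{d\times d\times d}$ and vectors $u,v,w$, the multilinear form is $T(u,v,w)=\sum_{i,j,l}T_{ijl}u_iv_jw_l$, and $T(u,v,I)\in\mathbb{R}^d$ is the vector with $l$-th entry $\sum_{i,j}T_{ijl}u_iv_j$ (similarly $T(I,v,w)$, $T(u,I,w)$). The tensor spectral norm is $\|T\|=\sup_{\|u\|=\|v\|=\|w\|=1}|T(u,v,w)|$. For matrices $\|\cdot\|$ is the spectral norm. For nonzero $u,v\in\mathbb{R}^d$, $\mathrm{dist}(u,v):=\sup_{z\perp u}\frac{\langle z,v\rangle}{\|z\|\|v\|}$. *)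

theory Defs
  imports "HOL-Analysis.Analysis"
begin

type_synonym 'd tensor3 = "'d \<Rightarrow> 'd \<Rightarrow> 'd \<Rightarrow> real"

definition tform :: "('d::finite) tensor3 \<Rightarrow> real^'d \<Rightarrow> real^'d \<Rightarrow> real^'d \<Rightarrow> real" where
  "tform T u v w = (\<Sum>i\<in>UNIV. \<Sum>j\<in>UNIV. \<Sum>l\<in>UNIV. T i j l * u$i * v$j * w$l)"

definition tvec12 :: "('d::finite) tensor3 \<Rightarrow> real^'d \<Rightarrow> real^'d \<Rightarrow> real^'d" where
  "tvec12 T u v = (\<chi> l. \<Sum>i\<in>UNIV. \<Sum>j\<in>UNIV. T i j l * u$i * v$j)"

definition tnorm :: "('d::finite) tensor3 \<Rightarrow> real" where
  "tnorm T = Sup {\<bar>tform T u v w\<bar> | u v w. norm u = 1 \<and> norm v = 1 \<and> norm w = 1}"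

definition outer3 :: "real^'d \<Rightarrow> real^'d \<Rightarrow> real^'d \<Rightarrow> ('d::finite) tensor3" where
  "outer3 a b c = (\<lambda>i j l. a$i * b$j * c$l)"

definition colmat :: "('k::finite \<Rightarrow> real^'d) \<Rightarrow> real^'k^'d" where
  "colmat a = (\<chi> r. \<chi> i. a i $ r)"

definition matnorm :: "real^'k^'d \<Rightarrow> real" where
  "matnorm M = onorm (\<lambda>x. M *v x)"

text \<open>dist(u,v) = sup over z orthogonal to u of <z,v>/(|z||v|); z = 0 contributes 0
  (Isabelle division by zero), which does not change the supremum (always >= 0).\<close>
definition vdist :: "'a::real_inner \<Rightarrow> 'a \<Rightarrow> real" where
  "vdist u v = Sup {inner z v / (norm z * norm v) | z. inner z u = 0}"

definition cpd :: "('k::finite \<Rightarrow> real) \<Rightarrow> ('k \<Rightarrow> real^'d) \<Rightarrow> ('k \<Rightarrow> real^'d) \<Rightarrow> ('k \<Rightarrow> real^'d) \<Rightarrow> ('d::finite) tensor3" where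
  "cpd w a b c = (\<lambda>p q r. \<Sum>i\<in>UNIV. w i * outer3 (a i) (b i) (c i) p q r)"

definition tadd :: "('d::finite) tensor3 \<Rightarrow> 'd tensor3 \<Rightarrow> 'd tensor3" where
  "tadd S U = (\<lambda>p q r. S p q r + U p q r)"

definition ferr :: "real \<Rightarrow> real \<Rightarrow> nat \<Rightarrow> nat \<Rightarrow> real \<Rightarrow> real" where
  "ferr \<alpha> \<alpha>0 k d \<epsilon> =
     \<alpha> * sqrt (real k) / real d
     + (2 * \<alpha> / sqrt (real d)) * (1 + \<alpha>0 * sqrt (real k / real d))^2 * \<epsilon>
     + \<alpha>0 * \<epsilon>^2"

end

theory Submission
  imports Defs
begin


lemma tvec12_add1: "tvec12 S (u + u') v = tvec12 S u v + tvec12 S u' v"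
  by (simp add: tvec12_def vec_eq_iff algebra_simps sum.distrib)
lemma tvec12_add2: "tvec12 S u (v + v') = tvec12 S u v + tvec12 S u v'"
  by (simp add: tvec12_def vec_eq_iff algebra_simps sum.distrib)
lemma tvec12_scale1: "tvec12 S (r *\<^sub>R u) v = r *\<^sub>R tvec12 S u v"
  by (simp add: tvec12_def vec_eq_iff sum_distrib_left mult_ac)
lemma tvec12_scale2: "tvec12 S u (r *\<^sub>R v) = r *\<^sub>R tvec12 S u v"
  by (simp add: tvec12_def vec_eq_iff sum_distrib_left mult_ac)
lemma tvec12_tadd: "tvec12 (tadd S U) u v = tvec12 S u v + tvec12 U u v"
  by (simp add: tvec12_def tadd_def vec_eq_iff algebra_simps sum.distrib)
lemma sum3_swap: "(\<Sum>i\<in>A. \<Sum>j\<in>B. \<Sum>l\<in>C. f i j l) = (\<Sum>l\<in>C. \<Sum>i\<in>A. \<Sum>j\<in>B. f i j l)"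
proof -
  have "(\<Sum>i\<in>A. \<Sum>j\<in>B. \<Sum>l\<in>C. f i j l) = (\<Sum>i\<in>A. \<Sum>l\<in>C. \<Sum>j\<in>B. f i j l)"
    by (rule sum.cong[OF refl], rule sum.swap)
  also have "\<dots> = (\<Sum>l\<in>C. \<Sum>i\<in>A. \<Sum>j\<in>B. f i j l)" by (rule sum.swap)
  finally show ?thesis .
qed

lemma tform_eq: "tform S u v z = tvec12 S u v \<bullet> z"
  unfolding tform_def tvec12_def inner_vec_def
  apply (subst sum3_swap)
  apply (simp add: sum_distrib_left mult_ac)
  done

lemma tvec12_cpd: "tvec12 (cpd w a b c) u v = (\<Sum>i\<in>UNIV. (w i * (a i \<bullet> u) * (b i \<bullet> v)) *\<^sub>R c i)"
  unfolding tvec12_def cpd_def outer3_def vec_eq_iff inner_vec_def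
  apply (simp add: sum_distrib_left sum_distrib_right)
  apply (subst sum3_swap)
  apply (simp add: mult_ac)
  apply (rule allI, rule sum.cong[OF refl])
  apply (subst sum.swap)
  apply (simp add: mult_ac)
  done

lemma colmat_mult: "colmat c *v g = (\<Sum>i\<in>UNIV. (g $ i) *\<^sub>R c i)"
  by (simp add: colmat_def matrix_vector_mult_def vec_eq_iff sum_component mult.commute)



lemma tnorm_bdd: "bdd_above {\<bar>tform T u v w\<bar> | u v w. norm u = 1 \<and> norm v = 1 \<and> norm w = 1}"
proof -
  have "\<bar>tform T u v w\<bar> \<le> (\<Sum>i\<in>UNIV. \<Sum>j\<in>UNIV. \<Sum>l\<in>UNIV. \<bar>T i j l\<bar>)"
    if "norm u = 1" "norm v = 1" "norm w = 1" for u v w :: "real^'a"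
  proof -
    have cu: "\<bar>u$i\<bar> \<le> 1" "\<bar>v$i\<bar> \<le> 1" "\<bar>w$i\<bar> \<le> 1" for i
      using component_le_norm_cart[of u i] component_le_norm_cart[of v i] component_le_norm_cart[of w i] that
      by auto
    have "\<bar>tform T u v w\<bar> \<le> (\<Sum>i\<in>UNIV. \<Sum>j\<in>UNIV. \<Sum>l\<in>UNIV. \<bar>T i j l * u$i * v$j * w$l\<bar>)"
      unfolding tform_def
      by (rule order_trans[OF sum_abs], rule sum_mono, rule order_trans[OF sum_abs], rule sum_mono, rule sum_abs)
    also have "\<dots> \<le> (\<Sum>i\<in>UNIV. \<Sum>j\<in>UNIV. \<Sum>l\<in>UNIV. \<bar>T i j l\<bar>)"
    proof (intro sum_mono)
      fix i j l
      have "\<bar>u$i\<bar> * \<bar>v$j\<bar> * \<bar>w$l\<bar> \<le> 1"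
        using cu by (simp add: mult_le_one)
      hence "\<bar>T i j l\<bar> * (\<bar>u$i\<bar> * \<bar>v$j\<bar> * \<bar>w$l\<bar>) \<le> \<bar>T i j l\<bar> * 1"
        by (intro mult_left_mono) auto
      thus "\<bar>T i j l * u$i * v$j * w$l\<bar> \<le> \<bar>T i j l\<bar>" by (simp add: abs_mult mult_ac)
    qed
    finally show ?thesis .
  qed
  thus ?thesis by (intro bdd_aboveI) blast
qed

lemma tform_le_tnorm: "norm u = 1 \<Longrightarrow> norm v = 1 \<Longrightarrow> norm z = 1 \<Longrightarrow> \<bar>tform T u v z\<bar> \<le> tnorm T"
  unfolding tnorm_def by (rule cSup_upper[OF _ tnorm_bdd]) blast

lemma norm_tvec12_unit: "norm u = 1 \<Longrightarrow> norm v = 1 \<Longrightarrow> norm (tvec12 T u v) \<le> tnorm T"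
proof (cases "tvec12 T u v = 0")
  case True
  assume "norm u = 1" "norm v = 1"
  obtain z :: "real^'a" where "norm z = 1" using vector_choose_size[of 1] by auto
  then have "0 \<le> tnorm T" using tform_le_tnorm[OF \<open>norm u = 1\<close> \<open>norm v = 1\<close>, of z T] by linarith
  with True show ?thesis by simp
next
  case False
  assume h: "norm u = 1" "norm v = 1"
  have "tform T u v (sgn (tvec12 T u v)) = norm (tvec12 T u v)"
    using False by (simp add: tform_eq sgn_div_norm inner_scaleR_right power2_norm_eq_inner[symmetric] dot_square_norm divide_inverse power2_eq_square)
  moreover have "norm (sgn (tvec12 T u v)) = 1" using False by (simp add: norm_sgn)
  ultimately show ?thesis using tform_le_tnorm[OF h, of "sgn (tvec12 T u v)" T] by simp
qed

lemma norm_tvec12_le: "norm (tvec12 T u v) \<le> tnorm T * norm u * norm v"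
proof (cases "u = 0 \<or> v = 0")
  case True
  then have "tvec12 T u v = 0"
    by (auto simp: tvec12_def vec_eq_iff)
  with True show ?thesis by auto
next
  case False
  have su: "u = norm u *\<^sub>R sgn u" "v = norm v *\<^sub>R sgn v" using False by (auto simp: sgn_div_norm)
  have "tvec12 T u v = tvec12 T (norm u *\<^sub>R sgn u) (norm v *\<^sub>R sgn v)" using su by simp
  also have "\<dots> = (norm u * norm v) *\<^sub>R tvec12 T (sgn u) (sgn v)"
    by (simp only: tvec12_scale1 tvec12_scale2 scaleR_scaleR mult.commute)
  finally have "tvec12 T u v = (norm u * norm v) *\<^sub>R tvec12 T (sgn u) (sgn v)" .
  moreover have "norm (tvec12 T (sgn u) (sgn v)) \<le> tnorm T"
    using False by (intro norm_tvec12_unit) (auto simp: norm_sgn)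
  ultimately show ?thesis using False
    by (simp add: mult_left_mono mult.commute mult.left_commute)
qed



lemma vdist_bdd: "bdd_above {inner z v / (norm z * norm v) | z. inner z u = 0}"
proof -
  have "inner z v / (norm z * norm v) \<le> 1" for z
  proof (cases "norm z * norm v = 0")
    case True then show ?thesis by auto
  next
    case False
    then have "norm z * norm v > 0" by (simp add: less_le)
    moreover have "inner z v \<le> norm z * norm v" by (rule norm_cauchy_schwarz)
    ultimately show ?thesis by simp
  qed
  thus ?thesis by (intro bdd_aboveI) blast
qed

lemma perp_inner:
  fixes u v :: "'a::real_inner"
  assumes "norm u = 1" "norm v = 1"
  shows "(v - (u \<bullet> v) *\<^sub>R u) \<bullet> (v - (u \<bullet> v) *\<^sub>R u) = 1 - (u \<bullet> v)^2"
    "(v - (u \<bullet> v) *\<^sub>R u) \<bullet> v = 1 - (u \<bullet> v)^2"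
    "(v - (u \<bullet> v) *\<^sub>R u) \<bullet> u = 0"
proof -
  have uu: "u \<bullet> u = 1" "v \<bullet> v = 1" using assms by (simp_all add: dot_square_norm)
  have c: "v \<bullet> u = u \<bullet> v" by (rule inner_commute)
  show "(v - (u \<bullet> v) *\<^sub>R u) \<bullet> (v - (u \<bullet> v) *\<^sub>R u) = 1 - (u \<bullet> v)^2"
    unfolding inner_diff_left inner_diff_right inner_scaleR_left inner_scaleR_right uu c
    by (simp add: power2_eq_square)
  show "(v - (u \<bullet> v) *\<^sub>R u) \<bullet> v = 1 - (u \<bullet> v)^2"
    unfolding inner_diff_left inner_diff_right inner_scaleR_left inner_scaleR_right uu c
    by (simp add: power2_eq_square)
  show "(v - (u \<bullet> v) *\<^sub>R u) \<bullet> u = 0"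
    unfolding inner_diff_left inner_diff_right inner_scaleR_left inner_scaleR_right uu c
    by simp
qed

lemma perp_norm:
  fixes u v :: "'a::real_inner"
  assumes "norm u = 1" "norm v = 1"
  shows "norm (v - (u \<bullet> v) *\<^sub>R u) = sqrt (1 - (u \<bullet> v)^2)"
  using perp_inner(1)[OF assms] by (metis norm_eq_sqrt_inner)

lemma vdist_lower:
  fixes u v :: "'a::real_inner"
  assumes "norm u = 1" "norm v = 1"
  shows "sqrt (1 - (u \<bullet> v)^2) \<le> vdist u v"
proof -
  define x where "x = u \<bullet> v"
  define z where "z = v - x *\<^sub>R u"
  have uu: "u \<bullet> u = 1" "v \<bullet> v = 1" using assms by (simp_all add: dot_square_norm)
  have zu: "inner z u = 0" unfolding z_def x_def by (rule perp_inner(3)[OF assms])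
  have zv: "inner z v = 1 - x^2" unfolding z_def x_def by (rule perp_inner(2)[OF assms])
  have nz: "(norm z)^2 = 1 - x^2" unfolding z_def x_def power2_norm_eq_inner by (rule perp_inner(1)[OF assms])
  have "inner z v / (norm z * norm v) = sqrt (1 - x^2)"
  proof (cases "1 - x^2 = 0")
    case True then show ?thesis using zv by simp
  next
    case False
    have "1 - x^2 \<ge> 0" using nz by (metis zero_le_power2)
    hence p: "1 - x^2 > 0" using False by simp
    have "norm z = sqrt (1 - x^2)" using nz by (metis norm_ge_zero real_sqrt_unique)
    then show ?thesis using zv assms p by (simp add: real_div_sqrt)
  qed
  moreover have "inner z v / (norm z * norm v) \<le> vdist u v"
    unfolding vdist_def by (rule cSup_upper[OF _ vdist_bdd]) (use zu in blast)
  ultimately show ?thesis by (simp add: x_def)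
qed

lemma vdist_upper:
  fixes v c e :: "'a::real_inner"
  assumes veq: "v = m *\<^sub>R c + e" and m: "m \<noteq> 0" and c: "norm c = 1"
  shows "vdist (sgn v) c \<le> norm e / \<bar>m\<bar>"
  unfolding vdist_def
proof (rule cSup_least)
  have "inner 0 (sgn v) = 0" by simp
  then show "{inner z c / (norm z * norm c) |z. inner z (sgn v) = 0} \<noteq> {}" by blast
next
  fix t assume "t \<in> {inner z c / (norm z * norm c) |z. inner z (sgn v) = 0}"
  then obtain z where t: "t = inner z c / (norm z * norm c)" and z: "inner z (sgn v) = 0" by auto
  have zv: "inner z v = 0"
  proof (cases "v = 0")
    case True then show ?thesis by simp
  next
    case False then show ?thesis using z by (simp add: sgn_div_norm)
  qed
  hence "m * inner z c = - inner z e" using veq by (simp add: inner_add_right)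
  hence "\<bar>m\<bar> * \<bar>inner z c\<bar> = \<bar>inner z e\<bar>" by (metis abs_minus_cancel abs_mult)
  also have "\<dots> \<le> norm z * norm e" by (rule Cauchy_Schwarz_ineq2)
  finally have h: "\<bar>m\<bar> * \<bar>inner z c\<bar> \<le> norm z * norm e" .
  show "t \<le> norm e / \<bar>m\<bar>"
  proof (cases "z = 0")
    case True then show ?thesis using t by simp
  next
    case False
    hence "norm z > 0" by simp
    have "inner z c \<le> norm z * norm e / \<bar>m\<bar>" using h m
      by (simp add: le_divide_eq mult.commute) (smt (verit) abs_ge_self mult_left_mono abs_ge_zero)
    hence "inner z c / norm z \<le> norm e / \<bar>m\<bar>" using \<open>norm z > 0\<close>
      by (simp add: divide_le_eq mult.commute)
    thus ?thesis using t c by simp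
  qed
qed

lemma comp_norm_le:
  fixes g h :: "real^'n"
  assumes "\<And>i. \<bar>g$i\<bar> \<le> K * \<bar>h$i\<bar>" "K \<ge> 0"
  shows "norm g \<le> K * norm h"
proof -
  have "norm g = L2_set (\<lambda>i. \<bar>g$i\<bar>) UNIV" by (simp add: norm_vec_def)
  also have "\<dots> \<le> L2_set (\<lambda>i. K * \<bar>h$i\<bar>) UNIV" by (rule L2_set_mono) (use assms in auto)
  also have "\<dots> = K * L2_set (\<lambda>i. \<bar>h$i\<bar>) UNIV" using assms(2) by (simp add: L2_set_right_distrib)
  also have "\<dots> = K * norm h" by (simp add: norm_vec_def)
  finally show ?thesis .
qed

lemma BT_norm:
  fixes b :: "'k::finite \<Rightarrow> real^'d::finite"
  shows "norm (\<chi> i. b i \<bullet> q) \<le> matnorm (colmat b) * norm q"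
proof -
  define g where "g = (\<chi> i. b i \<bullet> q)"
  have "(norm g)^2 = g \<bullet> g" by (simp add: power2_norm_eq_inner)
  also have "\<dots> = (\<Sum>i\<in>UNIV. (g$i) * (b i \<bullet> q))" by (simp add: inner_vec_def g_def)
  also have "\<dots> = (colmat b *v g) \<bullet> q"
    by (simp add: colmat_mult inner_sum_left)
  also have "\<dots> \<le> norm (colmat b *v g) * norm q" by (rule norm_cauchy_schwarz)
  also have "\<dots> \<le> matnorm (colmat b) * norm g * norm q"
    unfolding matnorm_def by (intro mult_right_mono onorm matrix_vector_mul_bounded_linear) auto
  finally have h: "(norm g)^2 \<le> matnorm (colmat b) * norm q * norm g" by (simp add: mult_ac)
  show ?thesis
  proof (cases "norm g = 0")
    case True
    have "matnorm (colmat b) \<ge> 0" unfolding matnorm_def by (intro onorm_pos_le) auto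
    then show ?thesis using True g_def by simp
  next
    case False
    then have "norm g > 0" by simp
    then show ?thesis using h g_def by (simp add: power2_eq_square)
  qed
qed

lemma cross_bound:
  fixes b c :: "'k::finite \<Rightarrow> real^'d::finite"
  assumes "\<And>i. i \<noteq> j \<Longrightarrow> \<bar>h i\<bar> \<le> K" "K \<ge> 0"
  shows "norm (\<Sum>i\<in>UNIV - {j}. (h i * (b i \<bullet> q)) *\<^sub>R c i)
         \<le> matnorm (colmat c) * (K * (matnorm (colmat b) * norm q))"
proof -
  define g :: "real^'k" where "g = (\<chi> i. if i = j then 0 else h i * (b i \<bullet> q))"
  have "(\<Sum>i\<in>UNIV. (g$i) *\<^sub>R c i) = (g$j) *\<^sub>R c j + (\<Sum>i\<in>UNIV-{j}. (g$i) *\<^sub>R c i)"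
    by (rule sum.remove) auto
  also have "\<dots> = (\<Sum>i\<in>UNIV - {j}. (h i * (b i \<bullet> q)) *\<^sub>R c i)"
    by (auto simp: g_def intro!: sum.cong)
  finally have "(\<Sum>i\<in>UNIV - {j}. (h i * (b i \<bullet> q)) *\<^sub>R c i) = (\<Sum>i\<in>UNIV. (g$i) *\<^sub>R c i)" by simp
  also have "\<dots> = colmat c *v g" by (simp add: colmat_mult)
  finally have e: "(\<Sum>i\<in>UNIV - {j}. (h i * (b i \<bullet> q)) *\<^sub>R c i) = colmat c *v g" .
  have "norm g \<le> K * norm (\<chi> i. b i \<bullet> q)"
  proof (rule comp_norm_le[OF _ assms(2)])
    fix i show "\<bar>g$i\<bar> \<le> K * \<bar>(\<chi> i. b i \<bullet> q)$i\<bar>"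
      using assms by (auto simp: g_def abs_mult intro: mult_right_mono)
  qed
  also have "\<dots> \<le> K * (matnorm (colmat b) * norm q)"
    by (rule mult_left_mono[OF BT_norm assms(2)])
  finally have ng: "norm g \<le> K * (matnorm (colmat b) * norm q)" .
  have mc: "matnorm (colmat c) \<ge> 0" unfolding matnorm_def by (intro onorm_pos_le) auto
  have "norm (colmat c *v g) \<le> matnorm (colmat c) * norm g"
    unfolding matnorm_def by (intro onorm matrix_vector_mul_bounded_linear)
  also have "\<dots> \<le> matnorm (colmat c) * (K * (matnorm (colmat b) * norm q))"
    by (rule mult_left_mono[OF ng mc])
  finally show ?thesis using e by simp
qed



theorem mainTheorem1:
  fixes w :: "'k::finite \<Rightarrow> real"
    and a b c :: "'k \<Rightarrow> real^'d::finite"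
    and \<alpha> \<alpha>0 \<epsilon>a \<epsilon>b :: real
    and \<Psi> :: "'d tensor3"
    and j :: 'k
    and ah bh :: "real^'d"
  defines "wmax \<equiv> Max (range w)"
    and "kk \<equiv> CARD('k)"
    and "dd \<equiv> CARD('d)"
    and "\<psi> \<equiv> tnorm \<Psi>"
    and "\<epsilon> \<equiv> max \<epsilon>a \<epsilon>b"
  assumes wpos: "\<forall>i. w i > 0"
    and unit: "\<forall>i. norm (a i) = 1 \<and> norm (b i) = 1 \<and> norm (c i) = 1"
    and apos: "\<alpha> > 0" and a0pos: "\<alpha>0 > 0"
    and incoh: "\<forall>i i'. i \<noteq> i' \<longrightarrow>
        \<bar>a i \<bullet> a i'\<bar> \<le> \<alpha> / sqrt dd \<and> \<bar>b i \<bullet> b i'\<bar> \<le> \<alpha> / sqrt dd \<and> \<bar>c i \<bullet> c i'\<bar> \<le> \<alpha> / sqrt dd"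
    and matn: "matnorm (colmat a) \<le> 1 + \<alpha>0 * sqrt (kk / dd)"
              "matnorm (colmat b) \<le> 1 + \<alpha>0 * sqrt (kk / dd)"
              "matnorm (colmat c) \<le> 1 + \<alpha>0 * sqrt (kk / dd)"
    and Tn: "tnorm (cpd w a b c) \<le> \<alpha>0 * wmax"
    and cross: "\<forall>j'. norm (\<Sum>i\<in>UNIV - {j'}. (w i * (a i \<bullet> a j') * (b i \<bullet> b j')) *\<^sub>R c i)
                    \<le> \<alpha> * wmax * sqrt kk / dd"
    and ahu: "norm ah = 1" and bhu: "norm bh = 1"
    and dista: "vdist ah (a j) \<le> \<epsilon>a" and distb: "vdist bh (b j) \<le> \<epsilon>b"
    and gap: "w j - w j * \<epsilon>^2 - wmax * ferr \<alpha> \<alpha>0 kk dd \<epsilon> - \<psi> > 0"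
  shows "vdist (sgn (tvec12 (tadd (cpd w a b c) \<Psi>) ah bh)) (c j) \<le> (wmax * ferr \<alpha> \<alpha>0 kk dd \<epsilon> + \<psi>)
                          / (w j - w j * \<epsilon>^2 - wmax * ferr \<alpha> \<alpha>0 kk dd \<epsilon> - \<psi>)
     \<and> (vdist (sgn (tvec12 (tadd (cpd w a b c) \<Psi>) ah bh)) (c j) \<le> \<epsilon> \<longrightarrow>
          \<bar>tform (tadd (cpd w a b c) \<Psi>) ah bh (sgn (tvec12 (tadd (cpd w a b c) \<Psi>) ah bh)) - w j\<bar> \<le> 2 * w j * \<epsilon>^2 + wmax * ferr \<alpha> \<alpha>0 kk dd \<epsilon> + \<psi>)"
proof -
  define T where "T = cpd w a b c"
  define v where "v = tvec12 (tadd T \<Psi>) ah bh"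
  define x where "x = a j \<bullet> ah"
  define y where "y = b j \<bullet> bh"
  define u where "u = ah - x *\<^sub>R a j"
  define p where "p = bh - y *\<^sub>R b j"
  define M where "M = 1 + \<alpha>0 * sqrt (real kk / real dd)"
  define K where "K = wmax * \<alpha> / sqrt dd"
  define E where "E = wmax * ferr \<alpha> \<alpha>0 kk dd \<epsilon> + \<psi>"
  have fin: "finite (range w)" by simp
  have wle: "w i \<le> wmax" for i unfolding wmax_def by (rule Max_ge[OF fin]) simp
  have wmpos: "wmax > 0" using wle[of j] wpos by (meson less_le_trans)
  have Kpos: "K \<ge> 0" unfolding K_def using wmpos apos by simp
  have unj: "norm (a j) = 1" "norm (b j) = 1" "norm (c j) = 1" using unit by auto
  have ajj: "a j \<bullet> a j = 1" "b j \<bullet> b j = 1" using unj by (simp_all add: dot_square_norm)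
  have xle: "\<bar>x\<bar> \<le> 1" unfolding x_def using Cauchy_Schwarz_ineq2[of "a j" ah] unj ahu by simp
  have yle: "\<bar>y\<bar> \<le> 1" unfolding y_def using Cauchy_Schwarz_ineq2[of "b j" bh] unj bhu by simp
  have ahs: "ah = x *\<^sub>R a j + u" "bh = y *\<^sub>R b j + p" by (simp_all add: u_def p_def)
  have uorth: "a j \<bullet> u = 0" by (simp add: u_def x_def inner_diff_right ajj)
  have porth: "b j \<bullet> p = 0" by (simp add: p_def y_def inner_diff_right ajj)
  have uorth': "u \<bullet> a j = 0" "p \<bullet> b j = 0" using uorth porth by (simp_all add: inner_commute)
  have nu2: "(norm u)^2 = 1 - x^2"
    unfolding u_def x_def power2_norm_eq_inner by (rule perp_inner(1)[OF unj(1) ahu])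
  have np2: "(norm p)^2 = 1 - y^2"
    unfolding p_def y_def power2_norm_eq_inner by (rule perp_inner(1)[OF unj(2) bhu])
  have nu: "norm u = sqrt (1 - x^2)" using nu2 by (metis norm_ge_zero real_sqrt_unique)
  have np: "norm p = sqrt (1 - y^2)" using np2 by (metis norm_ge_zero real_sqrt_unique)
  have vda: "norm u \<le> \<epsilon>a" using vdist_lower[OF ahu unj(1)] dista nu by (simp add: x_def inner_commute)
  have vdb: "norm p \<le> \<epsilon>b" using vdist_lower[OF bhu unj(2)] distb np by (simp add: y_def inner_commute)
  have nue: "norm u \<le> \<epsilon>" "norm p \<le> \<epsilon>" using vda vdb unfolding \<epsilon>_def by auto
  have epos: "\<epsilon> \<ge> 0" using nue(1) norm_ge_zero[of u] by linarith
  have x2: "1 - x^2 \<le> \<epsilon>^2" using nu2 power_mono[OF nue(1) norm_ge_zero, of 2] by simp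
  have y2: "1 - y^2 \<le> \<epsilon>^2" using np2 power_mono[OF nue(2) norm_ge_zero, of 2] by simp
  have xy: "\<bar>x * y\<bar> \<ge> 1 - \<epsilon>^2"
  proof (cases "\<epsilon>^2 \<ge> 1")
    case True then show ?thesis by simp
  next
    case False
    have "(1 - \<epsilon>^2) * (1 - \<epsilon>^2) \<le> x^2 * y^2"
      using False x2 y2 by (intro mult_mono) auto
    hence "(1 - \<epsilon>^2)^2 \<le> (\<bar>x * y\<bar>)^2" by (simp add: power2_eq_square power_mult_distrib mult_ac)
    thus ?thesis by (rule power2_le_imp_le) simp
  qed
  have xy1: "\<bar>x * y\<bar> \<le> 1" using xle yle by (simp add: abs_mult mult_le_one)
  define S0 where "S0 = (\<Sum>i\<in>UNIV - {j}. (w i * (a i \<bullet> a j) * (b i \<bullet> b j)) *\<^sub>R c i)"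
  define S1 where "S1 = (\<Sum>i\<in>UNIV - {j}. ((w i * (a i \<bullet> a j)) * (b i \<bullet> p)) *\<^sub>R c i)"
  define S2 where "S2 = (\<Sum>i\<in>UNIV - {j}. ((w i * (b i \<bullet> b j)) * (a i \<bullet> u)) *\<^sub>R c i)"
  have rem: "\<And>f :: 'k \<Rightarrow> real^'d. (\<Sum>i\<in>UNIV. f i) = f j + (\<Sum>i\<in>UNIV - {j}. f i)"
    by (rule sum.remove) auto
  have t0: "tvec12 T (a j) (b j) = w j *\<^sub>R c j + S0"
    unfolding T_def tvec12_cpd S0_def by (subst rem) (simp add: ajj)
  have t1: "tvec12 T (a j) p = S1"
    unfolding T_def tvec12_cpd S1_def by (subst rem) (simp add: uorth uorth' porth mult_ac)
  have t2: "tvec12 T u (b j) = S2"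
    unfolding T_def tvec12_cpd S2_def by (subst rem) (simp add: uorth uorth' porth mult_ac)
  define e where "e = (x * y) *\<^sub>R S0 + x *\<^sub>R S1 + y *\<^sub>R S2 + tvec12 T u p + tvec12 \<Psi> ah bh"
  have veq: "v = (w j * x * y) *\<^sub>R c j + e"
  proof -
    have "v = tvec12 T ah bh + tvec12 \<Psi> ah bh" by (simp add: v_def tvec12_tadd)
    also have "tvec12 T ah bh = (x * y) *\<^sub>R tvec12 T (a j) (b j) + x *\<^sub>R tvec12 T (a j) p
        + y *\<^sub>R tvec12 T u (b j) + tvec12 T u p"
      by (subst ahs(1), subst ahs(2))
         (simp add: tvec12_add1 tvec12_add2 tvec12_scale1 tvec12_scale2 algebra_simps)
    finally show ?thesis by (simp add: t0 t1 t2 e_def algebra_simps)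
  qed
  have hK: "\<bar>w i * (a i \<bullet> a j)\<bar> \<le> K" "\<bar>w i * (b i \<bullet> b j)\<bar> \<le> K" if "i \<noteq> j" for i
  proof -
    have inc: "\<bar>a i \<bullet> a j\<bar> \<le> \<alpha> / sqrt dd" "\<bar>b i \<bullet> b j\<bar> \<le> \<alpha> / sqrt dd" using incoh that by auto
    have w0: "\<bar>w i\<bar> \<le> wmax" using wle[of i] wpos by (simp add: less_imp_le)
    show "\<bar>w i * (a i \<bullet> a j)\<bar> \<le> K" unfolding K_def abs_mult times_divide_eq_right[symmetric]
      by (rule mult_mono[OF w0 inc(1)]) (use wmpos in auto)
    show "\<bar>w i * (b i \<bullet> b j)\<bar> \<le> K" unfolding K_def abs_mult times_divide_eq_right[symmetric]
      by (rule mult_mono[OF w0 inc(2)]) (use wmpos in auto)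
  qed
  have mA: "matnorm (colmat a) \<ge> 0" "matnorm (colmat b) \<ge> 0" "matnorm (colmat c) \<ge> 0"
    unfolding matnorm_def by (intro onorm_pos_le matrix_vector_mul_bounded_linear)+
  have matM: "matnorm (colmat a) \<le> M" "matnorm (colmat b) \<le> M" "matnorm (colmat c) \<le> M"
    using matn unfolding M_def by auto
  have Mpos: "M \<ge> 0" using mA(1) matM(1) by linarith
  have b0: "norm S0 \<le> \<alpha> * wmax * sqrt kk / dd" using cross unfolding S0_def by blast
  have b1: "norm S1 \<le> M * M * K * \<epsilon>"
  proof -
    have "norm S1 \<le> matnorm (colmat c) * (K * (matnorm (colmat b) * norm p))"
      unfolding S1_def by (rule cross_bound[OF hK(1) Kpos])
    also have "\<dots> \<le> M * (K * (M * \<epsilon>))"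
    proof -
      have q1: "matnorm (colmat b) * norm p \<le> M * \<epsilon>"
        by (rule mult_mono[OF matM(2) nue(2) Mpos norm_ge_zero])
      have q2: "K * (matnorm (colmat b) * norm p) \<le> K * (M * \<epsilon>)"
        by (rule mult_left_mono[OF q1 Kpos])
      have q3: "0 \<le> K * (matnorm (colmat b) * norm p)" using Kpos mA(2) by simp
      show ?thesis by (rule mult_mono[OF matM(3) q2 Mpos q3])
    qed
    finally show ?thesis by (simp add: mult_ac)
  qed
  have b2: "norm S2 \<le> M * M * K * \<epsilon>"
  proof -
    have "norm S2 \<le> matnorm (colmat c) * (K * (matnorm (colmat a) * norm u))"
      unfolding S2_def by (rule cross_bound[OF hK(2) Kpos])
    also have "\<dots> \<le> M * (K * (M * \<epsilon>))"
    proof -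
      have q1: "matnorm (colmat a) * norm u \<le> M * \<epsilon>"
        by (rule mult_mono[OF matM(1) nue(1) Mpos norm_ge_zero])
      have q2: "K * (matnorm (colmat a) * norm u) \<le> K * (M * \<epsilon>)"
        by (rule mult_left_mono[OF q1 Kpos])
      have q3: "0 \<le> K * (matnorm (colmat a) * norm u)" using Kpos mA(1) by simp
      show ?thesis by (rule mult_mono[OF matM(3) q2 Mpos q3])
    qed
    finally show ?thesis by (simp add: mult_ac)
  qed
  have b3: "norm (tvec12 T u p) \<le> \<alpha>0 * wmax * \<epsilon>^2"
  proof -
    have "norm (tvec12 T u p) \<le> tnorm T * (norm u * norm p)" using norm_tvec12_le[of T u p] by (simp add: mult_ac)
    also have "\<dots> \<le> (\<alpha>0 * wmax) * (norm u * norm p)"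
      using Tn unfolding T_def by (intro mult_right_mono) auto
    also have "\<dots> \<le> (\<alpha>0 * wmax) * (\<epsilon> * \<epsilon>)"
      using a0pos wmpos nue epos by (intro mult_left_mono mult_mono) auto
    finally show ?thesis by (simp add: power2_eq_square)
  qed
  have b4: "norm (tvec12 \<Psi> ah bh) \<le> \<psi>" using norm_tvec12_le[of \<Psi> ah bh] ahu bhu \<psi>_def by simp
  have ne: "norm e \<le> E"
  proof -
    have "norm e \<le> \<bar>x * y\<bar> * norm S0 + \<bar>x\<bar> * norm S1 + \<bar>y\<bar> * norm S2 + norm (tvec12 T u p) + norm (tvec12 \<Psi> ah bh)"
      unfolding e_def by (intro norm_triangle_le add_mono) (auto simp: order_refl)
    also have "\<dots> \<le> norm S0 + norm S1 + norm S2 + norm (tvec12 T u p) + norm (tvec12 \<Psi> ah bh)"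
      using xy1 xle yle by (intro add_mono mult_left_le_one_le) auto
    also have "\<dots> \<le> \<alpha> * wmax * sqrt kk / dd + M * M * K * \<epsilon> + M * M * K * \<epsilon> + \<alpha>0 * wmax * \<epsilon>^2 + \<psi>"
      using b0 b1 b2 b3 b4 by linarith
    also have "\<dots> = E"
      unfolding E_def ferr_def K_def M_def by (simp add: algebra_simps power2_eq_square)
    finally show ?thesis .
  qed
  have gap': "w j - w j * \<epsilon>^2 - E > 0" using gap E_def by simp
  define m where "m = w j * x * y"
  have mlow: "\<bar>m\<bar> \<ge> w j - w j * \<epsilon>^2"
  proof -
    have "w j * (1 - \<epsilon>^2) \<le> w j * \<bar>x * y\<bar>" using xy wpos by (intro mult_left_mono) (auto simp: less_imp_le)
    moreover have "\<bar>w j\<bar> = w j" using wpos by (simp add: less_imp_le)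
    ultimately show ?thesis unfolding m_def by (simp add: abs_mult algebra_simps)
  qed
  have mup: "\<bar>m\<bar> \<le> w j"
  proof -
    have "w j * \<bar>x * y\<bar> \<le> w j * 1" using xy1 wpos by (intro mult_left_mono) (auto simp: less_imp_le)
    moreover have "\<bar>w j\<bar> = w j" using wpos by (simp add: less_imp_le)
    ultimately show ?thesis unfolding m_def by (simp add: abs_mult mult_ac)
  qed
  have E0: "E \<ge> 0" using ne norm_ge_zero[of e] by linarith
  have veq': "v = m *\<^sub>R c j + e" using veq m_def by simp
  have mne: "m \<noteq> 0" using mlow gap' E0 by auto
  have part1: "vdist (sgn v) (c j) \<le> E / (w j - w j * \<epsilon>^2 - E)"
  proof -
    have "vdist (sgn v) (c j) \<le> norm e / \<bar>m\<bar>" by (rule vdist_upper[OF veq' mne unj(3)])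
    also have "\<dots> \<le> E / \<bar>m\<bar>" using ne mne by (simp add: divide_right_mono)
    also have "\<dots> \<le> E / (w j - w j * \<epsilon>^2 - E)"
      using E0 gap' mlow by (intro divide_left_mono) auto
    finally show ?thesis .
  qed
  have nvup: "norm v \<le> \<bar>m\<bar> + norm e" using veq' norm_triangle_ineq[of "m *\<^sub>R c j" e] unj by simp
  have nvlow: "norm v \<ge> \<bar>m\<bar> - norm e" using veq' norm_triangle_ineq2[of "m *\<^sub>R c j" "-e"] unj
    by (simp add: norm_minus_cancel)
  have tf: "tform (tadd T \<Psi>) ah bh (sgn v) = norm v"
  proof (cases "v = 0")
    case True then show ?thesis by (simp add: tform_eq v_def[symmetric])
  next
    case False
    then show ?thesis by (simp add: tform_eq v_def[symmetric] sgn_div_norm dot_square_norm power2_eq_square)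
  qed
  have part2: "\<bar>tform (tadd T \<Psi>) ah bh (sgn v) - w j\<bar> \<le> 2 * w j * \<epsilon>^2 + E"
  proof -
    have "0 \<le> w j * \<epsilon>^2" using wpos by (simp add: less_imp_le)
    thus ?thesis using tf nvup nvlow mlow mup ne by (simp add: abs_le_iff) linarith
  qed
  have eqd: "w j - w j * \<epsilon>^2 - E = w j - w j * \<epsilon>^2 - wmax * ferr \<alpha> \<alpha>0 kk dd \<epsilon> - \<psi>"
    unfolding E_def by simp
  have p1: "vdist (sgn v) (c j) \<le> (wmax * ferr \<alpha> \<alpha>0 kk dd \<epsilon> + \<psi>)
      / (w j - w j * \<epsilon>^2 - wmax * ferr \<alpha> \<alpha>0 kk dd \<epsilon> - \<psi>)"
    using part1 unfolding eqd by (simp only: E_def)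
  have p2: "\<bar>tform (tadd T \<Psi>) ah bh (sgn v) - w j\<bar> \<le> 2 * w j * \<epsilon>^2 + wmax * ferr \<alpha> \<alpha>0 kk dd \<epsilon> + \<psi>"
    using part2 unfolding E_def by linarith
  show ?thesis unfolding T_def[symmetric] v_def[symmetric] using p1 p2 by blast
qed

end
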